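(* Let $L_x=L_y=:L>0$, $L_{xy}\geq 0$, $0<\mu_x\leq L$, $0<\mu_y\leq L$, set $\mu=\min\{\mu_x,\mu_y\}$, and let $t\in\left(0, \tfrac{2\mu}{\mu L+L_{xy}^2}\right)$. Let $$ \alpha=1+\tfrac{1}{2}\left(L^2+\mu^2+2L_{xy}^2\right)t^2-(L+\mu)t +\tfrac{1}{2}(L-\mu)t\sqrt{(Lt + \mu t - 2)^2 + 4L_{xy}^2t^2}. $$ Then the bound $\|x^2-x^\star\|^2+\|y^2-y^\star\|^2\leq\alpha(\|x^1-x^\star\|^2+\|y^1-y^\star\|^2)$ for one step of the gradient descent-ascent method is exact: there exist $n,m$, a function $F\in\mathcal{F}(L_x, L_y, L_{xy}, \mu_x, \mu_y)$ on $\mathbb{R}^n\times\mathbb{R}^m$ with unique saddle point $(x^\star,y^\star)$, and an initial point $(x^1,y^1)\neq(x^\star,y^\star)$ such that $x^{2}=x^1-t\nabla_x F(x^1, y^1)$, $y^{2}=y^1+t\nabla_y F(x^1, y^1)$ satisfy $$ \|x^2-x^\star\|^2+\|y^2-y^\star\|^2= \alpha\left(\|x^1-x^\star\|^2+\|y^1-y^\star\|^2\right). $$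
   Context: $\mathcal{F}(L_x, L_y, L_{xy}, \mu_x, \mu_y)$ denotes the set of differentiable $F:\mathbb{R}^n\times\mathbb{R}^m\to\mathbb{R}$ such that for all $x,x_1,x_2,y,y_1,y_2$: $\|\nabla_x F(x_2, y)-\nabla_x F(x_1, y)\|\leq L_x\|x_2-x_1\|$; $\|\nabla_y F(x, y_2)-\nabla_y F(x, y_1)\|\leq L_y\|y_2-y_1\|$; $\|\nabla_x F(x, y_2)-\nabla_x F(x, y_1)\|\leq L_{xy}\|y_2-y_1\|$; $\|\nabla_y F(x_2, y)-\nabla_y F(x_1, y)\|\leq L_{xy}\|x_2-x_1\|$; $F(\cdot, y)-\tfrac{\mu_x}{2}\|\cdot\|^2$ convex for every $y$ and $F(x,\cdot)+\tfrac{\mu_y}{2}\|\cdot\|^2$ concave for every $x$. A saddle point is $(x^\star,y^\star)$ with $F(x^\star, y)\leq F(x^\star, y^\star)\leq F(x, y^\star)$ for all $x,y$. *)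

theory Defs
  imports "HOL-Analysis.Analysis"
begin

definition grad_x :: "('a::euclidean_space \<Rightarrow> 'b::euclidean_space \<Rightarrow> real) \<Rightarrow> 'a \<Rightarrow> 'b \<Rightarrow> 'a" where
  "grad_x F x y = (THE g. ((\<lambda>u. F u y) has_derivative (\<lambda>h. g \<bullet> h)) (at x))"

definition grad_y :: "('a::euclidean_space \<Rightarrow> 'b::euclidean_space \<Rightarrow> real) \<Rightarrow> 'a \<Rightarrow> 'b \<Rightarrow> 'b" where
  "grad_y F x y = (THE g. ((\<lambda>v. F x v) has_derivative (\<lambda>h. g \<bullet> h)) (at y))"

definition fclass :: "('a::euclidean_space \<Rightarrow> 'b::euclidean_space \<Rightarrow> real) \<Rightarrow> real \<Rightarrow> real \<Rightarrow> real \<Rightarrow> real \<Rightarrow> real \<Rightarrow> bool" where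
  "fclass F Lx Ly Lxy mux muy \<longleftrightarrow>
     (\<forall>z. (\<lambda>p. F (fst p) (snd p)) differentiable (at z)) \<and>
     (\<forall>x1 x2 y. norm (grad_x F x2 y - grad_x F x1 y) \<le> Lx * norm (x2 - x1)) \<and>
     (\<forall>x y1 y2. norm (grad_y F x y2 - grad_y F x y1) \<le> Ly * norm (y2 - y1)) \<and>
     (\<forall>x y1 y2. norm (grad_x F x y2 - grad_x F x y1) \<le> Lxy * norm (y2 - y1)) \<and>
     (\<forall>x1 x2 y. norm (grad_y F x2 y - grad_y F x1 y) \<le> Lxy * norm (x2 - x1)) \<and>
     (\<forall>y. convex_on UNIV (\<lambda>u. F u y - mux / 2 * (norm u)\<^sup>2)) \<and>
     (\<forall>x. concave_on UNIV (\<lambda>v. F x v + muy / 2 * (norm v)\<^sup>2))"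

definition saddle_point :: "('a \<Rightarrow> 'b \<Rightarrow> real) \<Rightarrow> 'a \<Rightarrow> 'b \<Rightarrow> bool" where
  "saddle_point F xs ys \<longleftrightarrow> (\<forall>x y. F xs y \<le> F xs ys \<and> F xs ys \<le> F x ys)"

end

theory Submission
  imports Defs
begin

lemma quad_convex:
  fixes w :: "'a::real_inner"
  assumes "k \<ge> 0"
  shows "convex_on UNIV (\<lambda>u. k * (u \<bullet> u) + w \<bullet> u + c)"
  unfolding convex_on_def
proof (intro conjI ballI allI impI)
  fix x y :: 'a and u v :: real
  assume uv: "u \<ge> 0" "v \<ge> 0" "u + v = 1"
  have e: "(u *\<^sub>R x + v *\<^sub>R y) \<bullet> (u *\<^sub>R x + v *\<^sub>R y) = u * u * (x\<bullet>x) + 2 * u * v * (x\<bullet>y) + v * v * (y\<bullet>y)"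
    by (simp add: inner_add_left inner_add_right inner_commute algebra_simps)
  have d: "(x - y) \<bullet> (x - y) = x\<bullet>x - 2 * (x\<bullet>y) + y\<bullet>y"
    by (simp add: inner_diff_left inner_diff_right inner_commute)
  have vv: "v = 1 - u" using uv by simp
  have "u * (k * (x \<bullet> x) + w \<bullet> x + c) + v * (k * (y \<bullet> y) + w \<bullet> y + c)
      - (k * ((u *\<^sub>R x + v *\<^sub>R y) \<bullet> (u *\<^sub>R x + v *\<^sub>R y)) + w \<bullet> (u *\<^sub>R x + v *\<^sub>R y) + c)
      = k * (u * v) * ((x - y) \<bullet> (x - y))"
    unfolding e d vv by (simp add: inner_add_right inner_commute algebra_simps)
  moreover have "0 \<le> k * (u * v) * ((x - y) \<bullet> (x - y))" using uv assms by simp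
  ultimately show "k * ((u *\<^sub>R x + v *\<^sub>R y) \<bullet> (u *\<^sub>R x + v *\<^sub>R y)) + w \<bullet> (u *\<^sub>R x + v *\<^sub>R y) + c
      \<le> u * (k * (x \<bullet> x) + w \<bullet> x + c) + v * (k * (y \<bullet> y) + w \<bullet> y + c)"
    by linarith
qed simp

lemma grad_eq:
  fixes G :: "'a::euclidean_space"
  assumes "(f has_derivative (\<lambda>h. G \<bullet> h)) (at x)"
  shows "(THE g. (f has_derivative (\<lambda>h. g \<bullet> h)) (at x)) = G"
proof (rule the_equality)
  show "(f has_derivative (\<lambda>h. G \<bullet> h)) (at x)" by (rule assms)
next
  fix g assume "(f has_derivative (\<lambda>h. g \<bullet> h)) (at x)"
  from has_derivative_unique[OF this assms] have "\<And>h. g \<bullet> h = G \<bullet> h" by metis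
  from this[of "g - G"] have "(g - G) \<bullet> (g - G) = 0" by (simp add: inner_diff_left)
  then show "g = G" by simp
qed

lemma eig2:
  fixes A B C t lam :: real
  defines "p \<equiv> (1 - t * A)^2 + t^2 * B^2" and "r \<equiv> (1 - t * C)^2 + t^2 * B^2" and "q \<equiv> t^2 * B * (A - C)"
  assumes "(lam - p) * (lam - r) = q^2"
  shows "\<exists>u v. (u, v) \<noteq> (0, 0) \<and> (u * (1 - t * A) - t * B * v)^2 + (v * (1 - t * C) + t * B * u)^2 = lam * (u^2 + v^2)"
proof -
  have key: "(u * (1 - t * A) - t * B * v)^2 + (v * (1 - t * C) + t * B * u)^2 = p * u^2 + 2 * q * u * v + r * v^2" for u v
    unfolding p_def r_def q_def by (simp add: power2_eq_square algebra_simps)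
  show ?thesis
  proof (cases "q = 0")
    case False
    have "p * q^2 + 2 * q * q * (lam-p) + r * (lam-p)^2 = lam * (q^2 + (lam-p)^2)"
    proof -
      have "p * q^2 + 2 * q * q * (lam-p) + r * (lam-p)^2 - lam * (q^2 + (lam-p)^2) = (lam - p) * (q^2 - (lam-p) * (lam-r))"
        by (simp add: power2_eq_square algebra_simps)
      then show ?thesis using assms(4) by simp
    qed
    then have "(q, lam - p) \<noteq> (0, 0) \<and> (q*(1 - t*A) - t*B*(lam-p))^2 + ((lam-p)*(1 - t*C) + t*B*q)^2 = lam * (q^2 + (lam-p)^2)"
      using False by (simp add: key)
    then show ?thesis by blast
  next
    case True
    then have "lam = p \<or> lam = r" using assms(4) by simp
    then show ?thesis
    proof
      assume "lam = p" then have "((1::real), (0::real)) \<noteq> (0, 0) \<and> (1*(1 - t*A) - t*B*0)^2 + (0*(1 - t*C) + t*B*1)^2 = lam * (1^2 + 0^2)"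
        by (simp add: p_def power2_eq_square)
      then show ?thesis by blast
    next
      assume "lam = r" then have "((0::real), (1::real)) \<noteq> (0, 0) \<and> (0*(1 - t*A) - t*B*1)^2 + (1*(1 - t*C) + t*B*0)^2 = lam * (0^2 + 1^2)"
        by (simp add: r_def power2_eq_square)
      then show ?thesis by blast
    qed
  qed
qed


lemma construction:
  fixes A B C t lam mux muy L Lxy :: real
  assumes "0 < A" "0 < C" "0 \<le> B" "B \<le> Lxy" "mux \<le> A" "A \<le> L" "muy \<le> C" "C \<le> L"
    and eig: "(lam - ((1 - t * A)^2 + t^2 * B^2)) * (lam - ((1 - t * C)^2 + t^2 * B^2)) = (t^2 * B * (A - C))^2"
  shows "\<exists>(F :: real^'n \<Rightarrow> real^'m \<Rightarrow> real) xs ys x1 y1.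
              fclass F L L Lxy mux muy \<and>
              saddle_point F xs ys \<and>
              (\<forall>a b. saddle_point F a b \<longrightarrow> a = xs \<and> b = ys) \<and>
              (x1, y1) \<noteq> (xs, ys) \<and>
              (let x2 = x1 - t *\<^sub>R grad_x F x1 y1;
                   y2 = y1 + t *\<^sub>R grad_y F x1 y1
               in (norm (x2 - xs))\<^sup>2 + (norm (y2 - ys))\<^sup>2
                  = lam * ((norm (x1 - xs))\<^sup>2 + (norm (y1 - ys))\<^sup>2))"
proof -
  define e :: "real^'n" where "e = axis undefined 1"
  define f :: "real^'m" where "f = axis undefined 1"
  have ne: "norm e = 1" "e \<bullet> e = 1" and nf: "norm f = 1" "f \<bullet> f = 1"
    unfolding e_def f_def by (simp_all add: inner_axis_axis)
  define F :: "real^'n \<Rightarrow> real^'m \<Rightarrow> real" where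
    "F = (\<lambda>x y. A/2 * (x \<bullet> x) + B * (x \<bullet> e) * (y \<bullet> f) - C/2 * (y \<bullet> y))"
  have gx: "grad_x F x y = A *\<^sub>R x + (B * (y \<bullet> f)) *\<^sub>R e" for x y
    unfolding grad_x_def
  proof (rule grad_eq)
    show "((\<lambda>u. F u y) has_derivative (\<lambda>h. (A *\<^sub>R x + (B * (y \<bullet> f)) *\<^sub>R e) \<bullet> h)) (at x)"
      unfolding F_def
      by (rule derivative_eq_intros refl)+
         (simp add: inner_add_left inner_commute algebra_simps)
  qed
  have gy: "grad_y F x y = (B * (x \<bullet> e)) *\<^sub>R f - C *\<^sub>R y" for x y
    unfolding grad_y_def
  proof (rule grad_eq)
    show "((\<lambda>v. F x v) has_derivative (\<lambda>h. ((B * (x \<bullet> e)) *\<^sub>R f - C *\<^sub>R y) \<bullet> h)) (at y)"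
      unfolding F_def
      by (rule derivative_eq_intros refl)+
         (simp add: inner_diff_left inner_commute algebra_simps)
  qed
  have diff: "(\<lambda>p. F (fst p) (snd p)) differentiable (at z)" for z
  proof -
    have d1: "fst differentiable (at z)" "snd differentiable (at z)" "(\<lambda>_. c) differentiable (at z)" for c :: "'q::real_normed_vector"
      by (rule differentiableI, rule has_derivative_fst has_derivative_snd has_derivative_const, (rule has_derivative_ident)?)+
    show ?thesis unfolding F_def
      by (intro derivative_intros differentiable_inner d1[unfolded fst_def snd_def] d1)
  qed
  have cs: "\<bar>w \<bullet> g\<bar> \<le> norm w" if "norm g = 1" for w g :: "'z::real_inner"
    using Cauchy_Schwarz_ineq2[of w g] that by simp
  have l1: "norm (grad_x F x2 y - grad_x F x1 y) \<le> L * norm (x2 - x1)" for x1 x2 y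
  proof -
    have "grad_x F x2 y - grad_x F x1 y = A *\<^sub>R (x2 - x1)" unfolding gx by (simp add: algebra_simps)
    then show ?thesis using assms by (simp add: mult_right_mono)
  qed
  have l2: "norm (grad_y F x y2 - grad_y F x y1) \<le> L * norm (y2 - y1)" for x y1 y2
  proof -
    have "grad_y F x y2 - grad_y F x y1 = (- C) *\<^sub>R (y2 - y1)" unfolding gy by (simp add: algebra_simps)
    then show ?thesis using assms by (simp add: mult_right_mono)
  qed
  have l3: "norm (grad_x F x y2 - grad_x F x y1) \<le> Lxy * norm (y2 - y1)" for x y1 y2
  proof -
    have "grad_x F x y2 - grad_x F x y1 = (B * ((y2 - y1) \<bullet> f)) *\<^sub>R e"
      unfolding gx by (simp add: algebra_simps inner_diff_left)
    then have "norm (grad_x F x y2 - grad_x F x y1) = B * \<bar>(y2 - y1) \<bullet> f\<bar>"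
      using ne assms by (simp add: abs_mult)
    also have "\<dots> \<le> Lxy * norm (y2 - y1)"
      using cs[OF nf(1), of "y2 - y1"] assms by (intro mult_mono) auto
    finally show ?thesis .
  qed
  have l4: "norm (grad_y F x2 y - grad_y F x1 y) \<le> Lxy * norm (x2 - x1)" for x1 x2 y
  proof -
    have "grad_y F x2 y - grad_y F x1 y = (B * ((x2 - x1) \<bullet> e)) *\<^sub>R f"
      unfolding gy by (simp add: algebra_simps inner_diff_left)
    then have "norm (grad_y F x2 y - grad_y F x1 y) = B * \<bar>(x2 - x1) \<bullet> e\<bar>"
      using nf assms by (simp add: abs_mult)
    also have "\<dots> \<le> Lxy * norm (x2 - x1)"
      using cs[OF ne(1), of "x2 - x1"] assms by (intro mult_mono) auto
    finally show ?thesis .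
  qed
  have cx: "convex_on UNIV (\<lambda>u. F u y - mux / 2 * (norm u)\<^sup>2)" for y
  proof -
    have "(\<lambda>u. F u y - mux / 2 * (norm u)\<^sup>2) = (\<lambda>u. ((A - mux)/2) * (u \<bullet> u) + ((B * (y \<bullet> f)) *\<^sub>R e) \<bullet> u + (- C/2 * (y \<bullet> y)))"
      unfolding F_def by (rule ext) (simp add: power2_norm_eq_inner inner_commute field_simps)
    then show ?thesis by (simp only:) (rule quad_convex, use assms in simp)
  qed
  have cv: "concave_on UNIV (\<lambda>v. F x v + muy / 2 * (norm v)\<^sup>2)" for x
  proof -
    have "(\<lambda>v. - (F x v + muy / 2 * (norm v)\<^sup>2)) = (\<lambda>v. ((C - muy)/2) * (v \<bullet> v) + (- (B * (x \<bullet> e)) *\<^sub>R f) \<bullet> v + (- A/2 * (x \<bullet> x)))"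
      unfolding F_def by (rule ext) (simp add: power2_norm_eq_inner inner_commute field_simps)
    then show ?thesis unfolding concave_on_def by (simp only:) (rule quad_convex, use assms in simp)
  qed
  have fc: "fclass F L L Lxy mux muy"
    unfolding fclass_def using diff l1 l2 l3 l4 cx cv by blast
  have sp: "saddle_point F 0 0"
    unfolding saddle_point_def F_def using assms by (simp add: mult_nonneg_nonneg)
  have uq: "a = 0 \<and> b = 0" if "saddle_point F a b" for a b
  proof -
    from that have "F a 0 \<le> F a b" "F a b \<le> F 0 b" unfolding saddle_point_def by blast+
    then have "A/2 * (a \<bullet> a) + C/2 * (b \<bullet> b) \<le> 0" unfolding F_def by simp
    moreover have "0 \<le> A/2 * (a \<bullet> a)" "0 \<le> C/2 * (b \<bullet> b)" using assms by simp_all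
    ultimately have "A/2 * (a \<bullet> a) = 0" "C/2 * (b \<bullet> b) = 0" by linarith+
    then show ?thesis using assms by simp
  qed
  obtain u v where uv: "(u, v) \<noteq> (0, 0)"
    and equ: "(u * (1 - t * A) - t * B * v)^2 + (v * (1 - t * C) + t * B * u)^2 = lam * (u^2 + v^2)"
    using eig2[OF eig] by blast
  have x2: "u *\<^sub>R e - t *\<^sub>R grad_x F (u *\<^sub>R e) (v *\<^sub>R f) = (u * (1 - t * A) - t * B * v) *\<^sub>R e"
    unfolding gx using nf by (simp add: algebra_simps)
  have y2: "v *\<^sub>R f + t *\<^sub>R grad_y F (u *\<^sub>R e) (v *\<^sub>R f) = (v * (1 - t * C) + t * B * u) *\<^sub>R f"
    unfolding gy using ne by (simp add: algebra_simps)
  have ne0: "(u *\<^sub>R e, v *\<^sub>R f) \<noteq> (0, 0)"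
    using uv ne nf by auto
  show ?thesis
    apply (rule exI[of _ F], rule exI[of _ 0], rule exI[of _ 0], rule exI[of _ "u *\<^sub>R e"], rule exI[of _ "v *\<^sub>R f"])
    using fc sp uq ne0 equ unfolding Let_def x2 y2 by (simp add: ne nf power_mult_distrib)
qed


lemma alpha_eig:
  fixes A B C t L mu :: real
  assumes AC: "(A = mu \<and> C = L) \<or> (A = L \<and> C = mu)"
  defines "alpha \<equiv> 1 + 1/2 * (L\<^sup>2 + mu\<^sup>2 + 2 * B\<^sup>2) * t\<^sup>2 - (L + mu) * t
                 + 1/2 * (L - mu) * t * sqrt ((L * t + mu * t - 2)\<^sup>2 + 4 * B\<^sup>2 * t\<^sup>2)"
  shows "(alpha - ((1 - t*A)^2 + t^2*B^2)) * (alpha - ((1 - t*C)^2 + t^2*B^2)) = (t^2*B*(A - C))^2"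
proof -
  define X where "X = (L * t + mu * t - 2)\<^sup>2 + 4 * B\<^sup>2 * t\<^sup>2"
  define S where "S = sqrt X"
  have S2: "S^2 = X" unfolding S_def X_def by simp
  define p where "p = (1 - t*A)^2 + t^2*B^2"
  define r where "r = (1 - t*C)^2 + t^2*B^2"
  define q where "q = t^2*B*(A - C)"
  define s where "s = 1/2 * (L - mu) * t * S"
  have a: "alpha = (p + r)/2 + s"
    using AC unfolding alpha_def p_def r_def s_def S_def X_def by (auto simp: power2_eq_square field_simps)
  have ss: "s^2 = ((p - r)/2)^2 + q^2"
  proof -
    have "s^2 = 1/4 * (L - mu)^2 * t^2 * S^2" unfolding s_def by (simp add: power2_eq_square)
    also have "\<dots> = ((p - r)/2)^2 + q^2"
    proof (rule disjE[OF AC])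
      assume h: "A = mu \<and> C = L"
      show ?thesis unfolding S2 X_def p_def r_def q_def h[THEN conjunct1] h[THEN conjunct2] by (simp add: power2_eq_square field_simps)
    next
      assume h: "A = L \<and> C = mu"
      show ?thesis unfolding S2 X_def p_def r_def q_def h[THEN conjunct1] h[THEN conjunct2] by (simp add: power2_eq_square field_simps)
    qed
    finally show ?thesis .
  qed
  have "(alpha - p) * (alpha - r) = s^2 - ((p - r)/2)^2"
    unfolding a by (simp add: power2_eq_square field_simps)
  then show ?thesis using ss unfolding p_def r_def q_def by simp
qed

theorem proposition2p4:
  fixes L Lxy mux muy t :: real
  assumes "L > 0" and "Lxy \<ge> 0"
    and "0 < mux" and "mux \<le> L" and "0 < muy" and "muy \<le> L"
    and "0 < t" and "t < 2 * min mux muy / (min mux muy * L + Lxy\<^sup>2)"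
  shows "let \<mu> = min mux muy;
             \<alpha> = 1 + 1/2 * (L\<^sup>2 + \<mu>\<^sup>2 + 2 * Lxy\<^sup>2) * t\<^sup>2 - (L + \<mu>) * t
                 + 1/2 * (L - \<mu>) * t * sqrt ((L * t + \<mu> * t - 2)\<^sup>2 + 4 * Lxy\<^sup>2 * t\<^sup>2)
         in \<exists>(F :: real^'n \<Rightarrow> real^'m \<Rightarrow> real) xs ys x1 y1.
              fclass F L L Lxy mux muy \<and>
              saddle_point F xs ys \<and>
              (\<forall>a b. saddle_point F a b \<longrightarrow> a = xs \<and> b = ys) \<and>
              (x1, y1) \<noteq> (xs, ys) \<and>
              (let x2 = x1 - t *\<^sub>R grad_x F x1 y1;
                   y2 = y1 + t *\<^sub>R grad_y F x1 y1
               in (norm (x2 - xs))\<^sup>2 + (norm (y2 - ys))\<^sup>2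
                  = \<alpha> * ((norm (x1 - xs))\<^sup>2 + (norm (y1 - ys))\<^sup>2))"
proof -
  define mu where "mu = min mux muy"
  define alpha where "alpha = 1 + 1/2 * (L\<^sup>2 + mu\<^sup>2 + 2 * Lxy\<^sup>2) * t\<^sup>2 - (L + mu) * t
                 + 1/2 * (L - mu) * t * sqrt ((L * t + mu * t - 2)\<^sup>2 + 4 * Lxy\<^sup>2 * t\<^sup>2)"
  have ex: "\<exists>(F :: real^'n \<Rightarrow> real^'m \<Rightarrow> real) xs ys x1 y1.
              fclass F L L Lxy mux muy \<and>
              saddle_point F xs ys \<and>
              (\<forall>a b. saddle_point F a b \<longrightarrow> a = xs \<and> b = ys) \<and>
              (x1, y1) \<noteq> (xs, ys) \<and>
              (let x2 = x1 - t *\<^sub>R grad_x F x1 y1;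
                   y2 = y1 + t *\<^sub>R grad_y F x1 y1
               in (norm (x2 - xs))\<^sup>2 + (norm (y2 - ys))\<^sup>2
                  = alpha * ((norm (x1 - xs))\<^sup>2 + (norm (y1 - ys))\<^sup>2))"
  proof (cases "mux \<le> muy")
    case True
    then have m: "mu = mux" unfolding mu_def by simp
    have "(alpha - ((1 - t*mux)^2 + t^2*Lxy^2)) * (alpha - ((1 - t*L)^2 + t^2*Lxy^2)) = (t^2*Lxy*(mux - L))^2"
      unfolding alpha_def using alpha_eig[of mux mu L L Lxy t] m by simp
    moreover have "0 < mux" "0 < L" "0 \<le> Lxy" "Lxy \<le> Lxy" "mux \<le> mux" "mux \<le> L" "muy \<le> L" "L \<le> L"
      using assms True by auto
    ultimately show ?thesis by (rule construction[rotated 8])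
  next
    case False
    then have m: "mu = muy" unfolding mu_def by simp
    have "(alpha - ((1 - t*L)^2 + t^2*Lxy^2)) * (alpha - ((1 - t*muy)^2 + t^2*Lxy^2)) = (t^2*Lxy*(L - muy))^2"
      unfolding alpha_def using alpha_eig[of L mu muy L Lxy t] m by simp
    moreover have "0 < L" "0 < muy" "0 \<le> Lxy" "Lxy \<le> Lxy" "mux \<le> L" "L \<le> L" "muy \<le> muy" "muy \<le> L"
      using assms False by auto
    ultimately show ?thesis by (rule construction[rotated 8])
  qed
  then show ?thesis unfolding mu_def alpha_def by (simp only: Let_def)
qed

end
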